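(* Let $q>2$ be a prime power, let $n\ge1$ with $\gcd(n,q-1)=1$, let $f(x)$ be a monic irreducible polynomial of degree $n$ over $\mathbb{F}_q$, and let $\theta$ be a primitive element of $\mathbb{F}_q$. Let $R(x)$ be the remainder of $x^q-\theta x$ modulo $f(x)$, and let $\psi(x)=\sum_{u=0}^{n}\psi_u x^u\in\mathbb{F}_q[x]$ be the monic nonzero polynomial of least degree satisfying $$\sum_{u=0}^{n}\psi_u\,(R(x))^u\equiv 0\pmod{f(x)}.$$ Then $\psi(x)$ is an irreducible polynomial of degree $n$ over $\mathbb{F}_q$, and $F(x)=\psi(x^q-\theta x)/f(x)$ is an irreducible polynomial of degree $n(q-1)$ over $\mathbb{F}_q$.
   Context: A primitive element of $\mathbb{F}_q$ is a generator of the cyclic group $\mathbb{F}_q^*$. *)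

theory Defs
  imports "HOL-Computational_Algebra.Computational_Algebra"
begin

definition primitive_element :: "'a::field \<Rightarrow> bool" where
  "primitive_element \<theta> \<longleftrightarrow> \<theta> \<noteq> 0 \<and> (\<forall>x. x \<noteq> 0 \<longrightarrow> (\<exists>k::nat. x = \<theta> ^ k))"

end

theory Submission
  imports Defs "HOL-Algebra.Algebraic_Closure_Type" "HOL-Algebra.Sylow"
begin
hide_const (open) Divisibility.prime Divisibility.irreducible Polynomials.degree
  up_ring.monom up_ring.coeff Polynomials.lead_coeff module.smult

lemma fin_CHAR_prime: "prime CHAR('a::{finite,field})"
  by (rule prime_CHAR_semidom) (rule finite_imp_CHAR_pos, simp)

lemma fin_field_power_card:
  fixes x :: "'a :: {finite,field}"
  shows   "x ^ card (UNIV :: 'a set) = x"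
proof (cases "x = 0")
  case False
  have "x * (\<Prod>y\<in>UNIV-{0}. x * y) = x * x ^ (card (UNIV :: 'a set) - 1) * \<Prod>(UNIV-{0})"
    by (simp add: prod.distrib mult_ac)
  also have "x * x ^ (card (UNIV :: 'a set) - 1) = x ^ Suc (card (UNIV :: 'a set) - 1)"
    by (subst power_Suc) auto
  also have "Suc (card (UNIV :: 'a set) - 1) = card (UNIV :: 'a set)"
    using finite_UNIV_card_ge_0[where ?'a = 'a] by simp
  also have "(\<Prod>y\<in>UNIV-{0}. x * y) = (\<Prod>y\<in>UNIV-{0}. y)"
    by (rule prod.reindex_bij_witness[of _ "\<lambda>y. y / x" "\<lambda>y. x * y"]) (use False in auto)
  finally show ?thesis
    by simp
qed (use finite_UNIV_card_ge_0[where ?'a = 'a] in auto)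

definition addG :: "'a::field set \<Rightarrow> 'a monoid" where
  "addG S = \<lparr>carrier = S, monoid.mult = (+), one = 0\<rparr>"

lemma addG_group: "group (addG (UNIV::'a::field set))"
  unfolding addG_def
  by (rule groupI) (auto simp: add.assoc intro: exI[of _ "- _"])

lemma addG_pow: "x [^]\<^bsub>addG S\<^esub> (n::nat) = of_nat n * x"
  by (induction n) (auto simp: addG_def algebra_simps)

lemma card_prime_power:
  "\<exists>m. card (UNIV::'a::{finite,field} set) = CHAR('a) ^ m"
proof -
  define q where "q = card (UNIV::'a set)"
  define p where "p = CHAR('a)"
  have pp: "prime p" unfolding p_def by (rule fin_CHAR_prime)
  have q0: "q > 0" unfolding q_def by (simp add: finite_UNIV_card_ge_0)
  have only: "r = p" if r: "prime r" "r dvd q" for r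
  proof (rule ccontr)
    assume rp: "r \<noteq> p"
    define a where "a = multiplicity r q"
    have a1: "a \<ge> 1" unfolding a_def using r q0
      by (simp add: Suc_le_eq prime_multiplicity_gt_zero_iff)
    obtain m0 where qm: "q = r ^ a * m0" unfolding a_def using multiplicity_dvd by (metis dvdE)
    have "order (addG (UNIV::'a set)) = r ^ a * m0"
      using qm unfolding q_def order_def addG_def by simp
    moreover have "finite (carrier (addG (UNIV::'a set)))" by (simp add: addG_def)
    ultimately obtain H where H: "subgroup H (addG (UNIV::'a set))" "card H = r ^ a"
      using sylow_thm[OF r(1) addG_group[where 'a='a]] by blast
    have "r ^ 1 \<le> r ^ a" by (rule power_increasing) (use a1 prime_gt_0_nat[OF r(1)] in auto)
    hence c2: "card H \<ge> 2" using H(2) prime_ge_2_nat[OF r(1)] by simp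
    have "\<not> H \<subseteq> {0}"
    proof
      assume "H \<subseteq> {0}"
      hence "card H \<le> card {0::'a}" by (intro card_mono) auto
      with c2 show False by simp
    qed
    then obtain x where x: "x \<in> H" "x \<noteq> 0" by blast
    interpret G: group "addG (UNIV::'a set)" by (rule addG_group)
    have gH: "group ((addG UNIV)\<lparr>carrier := H\<rparr>)"
      by (rule subgroup.subgroup_is_group[OF H(1)]) (rule addG_group)
    have finH: "finite H" by simp
    have "x [^]\<^bsub>(addG UNIV)\<lparr>carrier := H\<rparr>\<^esub> order ((addG UNIV)\<lparr>carrier := H\<rparr>) = \<one>\<^bsub>(addG UNIV)\<lparr>carrier := H\<rparr>\<^esub>"
      by (rule group.pow_order_eq_1[OF gH]) (use x in simp)
    hence "x [^]\<^bsub>addG UNIV\<^esub> (r ^ a) = 0"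
      using H(2) G.nat_pow_consistent[of x "r^a" H] by (simp add: order_def addG_def)
    hence "of_nat (r ^ a) * x = 0" by (simp add: addG_pow)
    hence "of_nat (r ^ a) = (0::'a)" using x(2) by simp
    hence "p dvd r ^ a" unfolding p_def using of_nat_eq_0_iff_char_dvd by blast
    hence "p dvd r" using pp prime_dvd_power by blast
    hence "p = r" using pp r(1) by (simp add: primes_dvd_imp_eq)
    with rp show False by simp
  qed
  have "prime_factors q \<subseteq> {p}" using only
    by (auto simp: in_prime_factors_iff)
  hence "q = (\<Prod>r\<in>prime_factors q. r ^ multiplicity r q)"
    using prime_factorization_nat[OF q0] by simp
  also have "\<dots> = (\<Prod>r\<in>{p}. r ^ multiplicity r q)"
  proof (rule prod.mono_neutral_left)
    show "\<forall>i\<in>{p} - prime_factors q. i ^ multiplicity i q = 1"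
      using q0 pp by (auto simp: in_prime_factors_iff not_dvd_imp_multiplicity_0)
  qed (use \<open>prime_factors q \<subseteq> {p}\<close> in auto)
  finally show ?thesis unfolding q_def p_def by auto
qed

definition ev :: "'a::field poly \<Rightarrow> 'a alg_closure \<Rightarrow> 'a alg_closure" where
  "ev g a = poly (map_poly to_ac g) a"

lemma map_ac_add: "map_poly to_ac (g + h) = map_poly to_ac g + map_poly to_ac h"
  by (rule poly_eqI) (simp add: coeff_map_poly)

lemma map_ac_diff: "map_poly to_ac (g - h) = map_poly to_ac g - map_poly to_ac h"
  by (rule poly_eqI) (simp add: coeff_map_poly)

lemma map_ac_mult: "map_poly to_ac (g * h) = map_poly to_ac g * map_poly to_ac h"
  by (rule poly_eqI) (simp add: coeff_map_poly coeff_mult to_ac_sum)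

lemma ev_add [simp]: "ev (g + h) a = ev g a + ev h a"
  by (simp add: ev_def map_ac_add)
lemma ev_diff [simp]: "ev (g - h) a = ev g a - ev h a"
  by (simp add: ev_def map_ac_diff)
lemma ev_mult [simp]: "ev (g * h) a = ev g a * ev h a"
  by (simp add: ev_def map_ac_mult)
lemma ev_0 [simp]: "ev 0 a = 0"
  by (simp add: ev_def)
lemma ev_1 [simp]: "ev 1 a = 1"
  by (simp add: ev_def)
lemma ev_const [simp]: "ev [:c:] a = to_ac c"
  by (cases "c = 0") (simp_all add: ev_def map_poly_pCons)
lemma ev_pCons [simp]: "ev (pCons c g) a = to_ac c + a * ev g a"
  by (simp add: ev_def map_poly_pCons)
lemma ev_x [simp]: "ev [:0,1:] a = a"
  by simp
lemma ev_power [simp]: "ev (g ^ k) a = ev g a ^ k"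
  by (induction k) auto
lemma ev_smult [simp]: "ev (smult c g) a = to_ac c * ev g a"
  by (simp add: ev_def map_poly_smult)
lemma ev_monom [simp]: "ev (monom c k) a = to_ac c * a ^ k"
  by (simp add: ev_def map_poly_monom poly_monom)
lemma ev_pcompose [simp]: "ev (pcompose g h) a = ev g (ev h a)"
  by (induction g rule: pCons_induct) (auto simp: pcompose_pCons)

lemma ev_mod: "ev f a = 0 \<Longrightarrow> ev (g mod f) a = ev g a"
proof -
  assume f: "ev f a = 0"
  have "ev g a = ev (f * (g div f) + g mod f) a" by (simp only: mult_div_mod_eq)
  also have "\<dots> = ev (g mod f) a" by (simp only: ev_add ev_mult f mult_zero_left add_0)
  finally show ?thesis by simp
qed

lemma ev_dvd: "ev f a = 0 \<Longrightarrow> f dvd g \<Longrightarrow> ev g a = 0"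
  by (auto elim!: dvdE)

lemma ev_nonzero_const: "degree g = 0 \<Longrightarrow> g \<noteq> 0 \<Longrightarrow> ev g a \<noteq> 0"
  by (metis degree_eq_zeroE ev_const pCons_eq_0_iff to_ac_eq_0_iff)

lemma mindeg_irreducible:
  fixes h :: "'a::field poly"
  assumes h: "h \<noteq> 0" "ev h a = 0"
    and min: "\<And>g. g \<noteq> 0 \<Longrightarrow> ev g a = 0 \<Longrightarrow> degree h \<le> degree g"
  shows "irreducible h"
proof (rule Factorial_Ring.irreducibleI)
  show "h \<noteq> 0" by fact
  show "\<not> is_unit h"
  proof
    assume "is_unit h"
    hence "degree h = 0" using h(1) is_unit_iff_degree by blast
    thus False using ev_nonzero_const h by blast
  qed
  fix x y assume hxy: "h = x * y"
  hence x0: "x \<noteq> 0" and y0: "y \<noteq> 0" using h(1) by auto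
  have dg: "degree h = degree x + degree y" using hxy x0 y0 by (simp add: degree_mult_eq)
  have "ev x a * ev y a = 0" using hxy h(2) by simp
  hence "ev x a = 0 \<or> ev y a = 0" by simp
  thus "is_unit x \<or> is_unit y"
  proof
    assume "ev x a = 0"
    hence "degree h \<le> degree x" using min x0 by blast
    hence "degree y = 0" using dg by simp
    thus ?thesis using y0 is_unit_iff_degree by blast
  next
    assume "ev y a = 0"
    hence "degree h \<le> degree y" using min y0 by blast
    hence "degree x = 0" using dg by simp
    thus ?thesis using x0 is_unit_iff_degree by blast
  qed
qed

lemma ev_minpoly:
  fixes f g :: "'a::field poly"
  assumes irr: "irreducible f" and fa: "ev f a = 0"
  shows "ev g a = 0 \<longleftrightarrow> f dvd g"
proof
  assume g: "ev g a = 0"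
  have f0: "f \<noteq> 0" using irr by auto
  obtain m where m: "m \<noteq> 0 \<and> ev m a = 0"
     and mmin: "\<And>h. h \<noteq> 0 \<and> ev h a = 0 \<Longrightarrow> degree m \<le> degree h"
    using ex_has_least_nat[of "\<lambda>h. h \<noteq> 0 \<and> ev h a = 0" f degree] f0 fa by blast
  have mdvd: "m dvd h" if "ev h a = 0" for h
  proof -
    have "ev (h mod m) a = 0" using that m by (simp add: ev_mod)
    moreover have "h mod m = 0 \<or> degree (h mod m) < degree m"
      using m degree_mod_less by blast
    ultimately have "h mod m = 0" using mmin by fastforce
    thus ?thesis by (simp add: mod_eq_0_iff_dvd)
  qed
  obtain k where fk: "f = m * k" using mdvd[OF fa] by (elim dvdE)
  have "\<not> is_unit m"
  proof
    assume "is_unit m"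
    hence "degree m = 0" using m is_unit_iff_degree by blast
    thus False using ev_nonzero_const m by blast
  qed
  hence "is_unit k" using irr fk Factorial_Ring.irreducibleD by blast
  hence "f dvd m" using fk by (simp add: mult_unit_dvd_iff')
  thus "f dvd g" using mdvd[OF g] by (rule dvd_trans)
qed (use assms in \<open>auto intro: ev_dvd\<close>)


lemma fin_power_card_power: "(c::'a::{finite,field}) ^ (card (UNIV::'a set) ^ t) = c"
proof (induction t)
  case (Suc t)
  have "c ^ (card (UNIV::'a set) ^ Suc t) = (c ^ (card (UNIV::'a set) ^ t)) ^ card (UNIV::'a set)"
    by (simp only: power_Suc2 power_mult)
  thus ?case using Suc fin_field_power_card by simp
qed simp

lemma frob_add:
  fixes x y :: "'a::{finite,field} alg_closure"
  shows "(x + y) ^ (card (UNIV::'a set) ^ t) = x ^ (card (UNIV::'a set) ^ t) + y ^ (card (UNIV::'a set) ^ t)"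
proof -
  obtain m where m: "card (UNIV::'a set) = CHAR('a) ^ m" using card_prime_power by blast
  have "card (UNIV::'a set) ^ t = CHAR('a alg_closure) ^ (m * t)"
    by (simp add: m power_mult)
  moreover have "prime CHAR('a alg_closure)" using fin_CHAR_prime[where 'a='a] by simp
  ultimately show ?thesis by (intro freshmans_dream') auto
qed

lemma frob_diff:
  fixes x y :: "'a::{finite,field} alg_closure"
  shows "(x - y) ^ (card (UNIV::'a set) ^ t) = x ^ (card (UNIV::'a set) ^ t) - y ^ (card (UNIV::'a set) ^ t)"
  using frob_add[of "x - y" y t] by (simp add: algebra_simps)

lemma frob_const: "to_ac (c::'a::{finite,field}) ^ (card (UNIV::'a set) ^ t) = to_ac c"
  by (metis fin_power_card_power to_ac_power)

lemma ev_frob: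
  fixes g :: "'a::{finite,field} poly"
  shows "ev g (a ^ (card (UNIV::'a set) ^ t)) = ev g a ^ (card (UNIV::'a set) ^ t)"
  by (induction g rule: pCons_induct) (auto simp: frob_add frob_const power_mult_distrib finite_UNIV_card_ge_0)


definition B :: "nat \<Rightarrow> 'a::zero poly set" where
  "B k = {g. degree g < k}"

lemma card_B_Suc:
  "finite (B (Suc k) :: 'a::{finite,field} poly set) \<and> card (B (Suc k) :: 'a poly set) = card (UNIV::'a set) ^ Suc k"
proof (induction k)
  case 0
  have "B (Suc 0) = range (\<lambda>c::'a. [:c:])"
    unfolding B_def by (auto elim: degree_eq_zeroE)
  moreover have "inj (\<lambda>c::'a. [:c:])" by (auto intro: injI)
  ultimately show ?case by (simp add: card_image)
next
  case (Suc k)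
  have eq: "B (Suc (Suc k)) = (\<lambda>(c,g). pCons c g) ` (UNIV \<times> (B (Suc k) :: 'a poly set))"
  proof (intro equalityI subsetI)
    fix h :: "'a poly" assume "h \<in> B (Suc (Suc k))"
    then obtain c g where "h = pCons c g" "degree (pCons c g) < Suc (Suc k)"
      unfolding B_def by (cases h) auto
    thus "h \<in> (\<lambda>(c,g). pCons c g) ` (UNIV \<times> B (Suc k))"
      unfolding B_def by (auto simp: degree_pCons_eq_if split: if_splits)
  next
    fix h :: "'a poly" assume "h \<in> (\<lambda>(c,g). pCons c g) ` (UNIV \<times> B (Suc k))"
    thus "h \<in> B (Suc (Suc k))" unfolding B_def by (auto simp: degree_pCons_eq_if)
  qed
  have inj: "inj_on (\<lambda>(c,g). pCons c g) (UNIV \<times> (B (Suc k) :: 'a poly set))"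
    by (auto intro!: inj_onI)
  have fin: "finite ((UNIV::'a set) \<times> (B (Suc k) :: 'a poly set))" by (intro finite_cartesian_product) (use Suc finite_UNIV in auto)
  have "card (B (Suc (Suc k)) :: 'a poly set) = card ((UNIV::'a set) \<times> (B (Suc k) :: 'a poly set))"
    unfolding eq by (rule card_image[OF inj])
  also have "\<dots> = card (UNIV::'a set) * card (B (Suc k) :: 'a poly set)"
    by (rule card_cartesian_product)
  finally show ?case using Suc unfolding eq by (simp add: finite_imageI[OF fin])
qed

lemma card_B: "k \<ge> 1 \<Longrightarrow> finite (B k :: 'a::{finite,field} poly set) \<and> card (B k :: 'a poly set) = card (UNIV::'a set) ^ k"
  using card_B_Suc[of "k - 1"] by simp

lemma ev_inj_B:
  fixes h :: "'a::field poly"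
  assumes irr: "irreducible h" and hk: "degree h = k" and ha: "ev h a = 0"
  shows "inj_on (\<lambda>g. ev g a) (B k)"
proof (rule inj_onI)
  fix g1 g2 assume g: "g1 \<in> B k" "g2 \<in> B k" "ev g1 a = ev g2 a"
  hence "ev (g1 - g2) a = 0" by simp
  hence dv: "h dvd g1 - g2" using ev_minpoly[OF irr ha] by blast
  show "g1 = g2"
  proof (rule ccontr)
    assume "g1 \<noteq> g2"
    hence "degree h \<le> degree (g1 - g2)" using dv by (intro dvd_imp_degree_le) auto
    moreover have "degree (g1 - g2) \<le> max (degree g1) (degree g2)" by (rule degree_diff_le_max)
    hence "degree (g1 - g2) < k" using g unfolding B_def by simp
    ultimately show False using hk by simp
  qed
qed

lemma irr_deg_pos:
  fixes h :: "'a::field poly"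
  assumes "irreducible h" "ev h a = 0"
  shows "degree h \<ge> 1"
proof (rule ccontr)
  have "h \<noteq> 0" using assms(1) by (simp add: Factorial_Ring.irreducible_def)
  moreover assume "\<not> degree h \<ge> 1"
  ultimately show False using ev_nonzero_const[of h a] assms(2) by simp
qed

lemma card_ev_B:
  fixes h :: "'a::{finite,field} poly"
  assumes irr: "irreducible h" and hk: "degree h = k" and ha: "ev h a = 0"
  shows "card ((\<lambda>g. ev g a) ` B k) = card (UNIV::'a set) ^ k"
proof -
  have "k \<ge> 1"
    using irr_deg_pos[OF irr ha] hk by simp
  have "card ((\<lambda>g. ev g a) ` B k) = card (B k :: 'a poly set)" by (rule card_image[OF ev_inj_B[OF assms]])
  also have "\<dots> = card (UNIV::'a set) ^ k" using card_B[OF \<open>k \<ge> 1\<close>, where 'a='a] by simp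
  finally show ?thesis .
qed

lemma ev_B_closed:
  fixes h :: "'a::field poly"
  assumes hk: "degree h = k" and ha: "ev h a = 0" and k1: "k \<ge> 1"
  shows "ev g a \<in> (\<lambda>g. ev g a) ` B k"
proof
  show "ev g a = ev (g mod h) a" using ha by (simp add: ev_mod)
  have "h \<noteq> 0" using hk k1 by auto
  thus "g mod h \<in> B k" unfolding B_def using hk k1 degree_mod_less[of h g]
    by auto
qed

lemma lagrange_root:
  fixes h :: "'a::{finite,field} poly"
  assumes irr: "irreducible h" and hk: "degree h = k" and ha: "ev h a = 0"
  shows "a ^ (card (UNIV::'a set) ^ k) = a"
proof -
  let ?q = "card (UNIV::'a set)"
  define S where "S = (\<lambda>g. ev g a) ` B k"
  have k1: "k \<ge> 1"
    using irr_deg_pos[OF irr ha] hk by simp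
  have cS: "card S = ?q ^ k" unfolding S_def by (rule card_ev_B[OF assms])
  have fS: "finite S" unfolding S_def using card_B[OF k1] by auto
  have inS: "ev g a \<in> S" for g unfolding S_def by (rule ev_B_closed[OF hk ha k1])
  have q1: "?q ^ k > 0" by (simp add: finite_UNIV_card_ge_0)
  show ?thesis
  proof (cases "a = 0")
    case True thus ?thesis using q1 by simp
  next
    case False
    define T where "T = S - {0}"
    have fT: "finite T" using fS unfolding T_def by simp
    have zS: "0 \<in> S" using inS[of 0] by simp
    have cT: "card T = ?q ^ k - 1" unfolding T_def using cS zS fS by (simp add: card_Diff_singleton)
    have aS: "a \<in> S" using inS[of "[:0,1:]"] by simp
    have mulS: "u * v \<in> S" if "u \<in> S" "v \<in> S" for u v
    proof -
      from that(1) obtain g1 where g1: "u = ev g1 a" unfolding S_def by (rule imageE)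
      from that(2) obtain g2 where g2: "v = ev g2 a" unfolding S_def by (rule imageE)
      show ?thesis using inS[of "g1 * g2"] g1 g2 by simp
    qed
    have img: "(\<lambda>v. a * v) ` T = T"
    proof (rule endo_inj_surj[OF fT])
      show "(\<lambda>v. a * v) ` T \<subseteq> T" using mulS aS False unfolding T_def by auto
      show "inj_on (\<lambda>v. a * v) T" using False by (auto intro: inj_onI)
    qed
    have "prod (\<lambda>v. v) T = prod (\<lambda>v. v) ((\<lambda>v. a * v) ` T)" by (simp only: img)
    also have "\<dots> = prod (\<lambda>v. a * v) T"
      using False by (subst prod.reindex) (auto intro: inj_onI)
    also have "\<dots> = a ^ card T * prod (\<lambda>v. v) T" by (simp add: prod.distrib)
    finally have eq: "prod (\<lambda>v. v) T = a ^ card T * prod (\<lambda>v. v) T" .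
    have nz: "prod (\<lambda>v. v) T \<noteq> 0" using fT unfolding T_def by simp
    have "a ^ card T = 1" using eq nz mult_cancel_right1 by metis
    hence "a ^ (?q ^ k - 1) = 1" using cT by simp
    hence "a * a ^ (?q ^ k - 1) = a" by simp
    moreover have "Suc (?q ^ k - 1) = ?q ^ k" using q1 by simp
    ultimately show ?thesis by (metis power_Suc)
  qed
qed

lemma degree_le_fix:
  fixes h :: "'a::{finite,field} poly"
  assumes irr: "irreducible h" and hk: "degree h = k" and ha: "ev h a = 0"
    and fx: "a ^ (card (UNIV::'a set) ^ t) = a" and t1: "t \<ge> 1"
  shows "k \<le> t"
proof -
  let ?q = "card (UNIV::'a set)"
  let ?Q = "?q ^ t"
  define S where "S = (\<lambda>g. ev g a) ` B k"
  have cS: "card S = ?q ^ k" unfolding S_def by (rule card_ev_B[OF assms(1-3)])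
  define P :: "'a alg_closure poly" where "P = monom 1 ?Q - [:0,1:]"
  have q2: "?q \<ge> 2"
  proof -
    have "card {0::'a, 1} \<le> ?q" by (rule card_mono) auto
    thus ?thesis by simp
  qed
  have "?q ^ 1 \<le> ?q ^ t" by (rule power_increasing) (use t1 q2 in auto)
  hence Q2: "?Q \<ge> 2" using q2 by simp
  have P0: "P \<noteq> 0"
  proof
    assume "P = 0"
    hence "coeff P ?Q = 0" by simp
    moreover have "coeff [:0,1::'a alg_closure:] n = 0" if "n \<ge> 2" for n
      using that by (cases n; cases "n - 1") auto
    ultimately show False unfolding P_def using Q2 by simp
  qed
  have d1: "degree [:0,1::'a alg_closure:] \<le> ?Q" using Q2 by simp
  have dP: "degree P \<le> ?Q" unfolding P_def
    by (rule degree_diff_le[OF degree_monom_le d1])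
  have sub: "S \<subseteq> {y. poly P y = 0}"
  proof
    fix y assume "y \<in> S"
    then obtain g where yg: "y = ev g a" unfolding S_def by auto
    have e: "ev g a = ev g a ^ ?Q" using ev_frob[of g a t] unfolding fx .
    have "y ^ ?Q = y" unfolding yg using e by (rule sym)
    thus "y \<in> {y. poly P y = 0}" unfolding P_def by (simp add: poly_monom)
  qed
  have "card S \<le> card {y. poly P y = 0}"
    by (rule card_mono[OF poly_roots_finite[OF P0] sub])
  also have "\<dots> \<le> degree P" by (rule card_poly_roots_bound[OF P0])
  finally have le: "?q ^ k \<le> ?q ^ t" using cS dP by linarith
  have q1: "1 < ?q" using q2 by linarith
  show ?thesis using power_le_imp_le_exp[OF q1 le] .
qed


lemma pow_fix_mult:
  fixes x :: "'b::monoid_mult"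
  assumes "x ^ (N ^ t) = x"
  shows "x ^ (N ^ (t * j)) = x"
proof (induction j)
  case (Suc j)
  have "N ^ (t * Suc j) = N ^ (t * j) * N ^ t" by (simp only: mult_Suc_right power_add mult.commute)
  hence "x ^ (N ^ (t * Suc j)) = (x ^ (N ^ (t * j))) ^ (N ^ t)"
    by (simp only: power_mult)
  thus ?case using Suc assms by simp
qed simp

lemma pow_fix_mod:
  fixes x :: "'b::monoid_mult"
  assumes "x ^ (N ^ s) = x" "x ^ (N ^ t) = x"
  shows "x ^ (N ^ (s mod t)) = x"
proof -
  have "N ^ s = N ^ (t * (s div t)) * N ^ (s mod t)"
    by (simp flip: power_add)
  hence "x ^ (N ^ s) = (x ^ (N ^ (t * (s div t)))) ^ (N ^ (s mod t))"
    by (simp add: power_mult)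
  thus ?thesis using assms pow_fix_mult[OF assms(2)] by simp
qed

lemma pow_fix_gcd:
  fixes x :: "'b::monoid_mult"
  shows "x ^ (N ^ s) = x \<Longrightarrow> x ^ (N ^ t) = x \<Longrightarrow> x ^ (N ^ gcd s t) = x"
proof (induction s t rule: gcd_nat_induct)
  case (step m n)
  have "x ^ (N ^ (m mod n)) = x" by (rule pow_fix_mod[OF step.prems])
  hence g: "x ^ (N ^ gcd n (m mod n)) = x" using step by blast
  have "gcd m n = gcd n (m mod n)" by (rule gcd_red_nat)
  thus ?case using g by simp
qed simp

lemma pow_eigen:
  fixes x c :: "'b::comm_monoid_mult"
  assumes "x ^ N = c * x" "c ^ N = c"
  shows "x ^ (N ^ t) = c ^ t * x"
proof (induction t)
  case (Suc t)
  have "x ^ (N ^ Suc t) = (x ^ (N ^ t)) ^ N" by (simp only: power_Suc2 power_mult)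
  also have "\<dots> = (c ^ t * x) ^ N" using Suc by simp
  also have "\<dots> = (c ^ t) ^ N * x ^ N" by (rule power_mult_distrib)
  also have "(c ^ t) ^ N = (c ^ N) ^ t" by (metis power_mult mult.commute)
  also have "(c ^ N) ^ t * x ^ N = c ^ Suc t * x" using assms by (simp add: mult_ac)
  finally show ?case .
qed simp

lemma prim_order:
  fixes \<theta> :: "'a::{finite,field}"
  assumes prim: "primitive_element \<theta>" and k: "\<theta> ^ k = 1"
  shows "(card (UNIV::'a set) - 1) dvd k"
proof -
  let ?q = "card (UNIV::'a set)"
  have t0: "\<theta> \<noteq> 0" using prim by (simp add: primitive_element_def)
  have tq: "\<theta> ^ (?q - 1) = 1"
  proof -
    have "\<theta> * \<theta> ^ (?q - 1) = \<theta> * 1"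
      using fin_field_power_card[of \<theta>] finite_UNIV_card_ge_0[where 'a='a]
      by (metis Suc_diff_1 finite_UNIV mult.right_neutral power_Suc)
    thus ?thesis using t0 by simp
  qed
  define r where "r = k mod (?q - 1)"
  have "k = (?q - 1) * (k div (?q - 1)) + r" unfolding r_def by simp
  hence "\<theta> ^ k = (\<theta> ^ (?q - 1)) ^ (k div (?q - 1)) * \<theta> ^ r"
    by (metis power_add power_mult)
  hence tr: "\<theta> ^ r = 1" using tq k by simp
  show ?thesis
  proof (rule ccontr)
    assume nd: "\<not> (?q - 1) dvd k"
    hence r0: "r > 0" unfolding r_def by (simp add: dvd_eq_mod_eq_0)
    have "card {0::'a, 1} \<le> ?q" by (rule card_mono) auto
    hence "?q - 1 > 0" by simp
    hence rl: "r < ?q - 1" unfolding r_def by (rule mod_less_divisor)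
    have "UNIV - {0} \<subseteq> (\<lambda>i. \<theta> ^ i) ` {..<r}"
    proof
      fix x :: 'a assume "x \<in> UNIV - {0}"
      then obtain j where j: "x = \<theta> ^ j" using prim by (auto simp: primitive_element_def)
      have "\<theta> ^ j = (\<theta> ^ r) ^ (j div r) * \<theta> ^ (j mod r)"
        by (metis div_mult_mod_eq power_add power_mult mult.commute)
      hence "x = \<theta> ^ (j mod r)" using j tr by simp
      thus "x \<in> (\<lambda>i. \<theta> ^ i) ` {..<r}" using r0 by auto
    qed
    hence "card (UNIV - {0::'a}) \<le> card ((\<lambda>i. \<theta> ^ i) ` {..<r})" by (intro card_mono) auto
    also have "\<dots> \<le> r" using card_image_le[of "{..<r}" "\<lambda>i. \<theta> ^ i"] by simp
    finally have "?q - 1 \<le> r" by (simp add: card_Diff_singleton)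
    thus False using rl by simp
  qed
qed

theorem mainTheorem7:
  fixes f \<psi> :: "'a::{finite,field} poly" and \<theta> :: 'a and n :: nat
  defines "q \<equiv> card (UNIV :: 'a set)"
  defines "R \<equiv> (monom 1 q - smult \<theta> [:0, 1:]) mod f"
  assumes q_gt: "q > 2"
    and n_ge: "n \<ge> 1"
    and coprime: "gcd n (q - 1) = 1"
    and f_monic: "lead_coeff f = 1"
    and f_irr: "irreducible f"
    and f_deg: "degree f = n"
    and prim: "primitive_element \<theta>"
    and psi_nz: "\<psi> \<noteq> 0"
    and psi_monic: "lead_coeff \<psi> = 1"
    and psi_ann: "f dvd pcompose \<psi> R"
    and psi_min: "\<And>g. g \<noteq> 0 \<Longrightarrow> f dvd pcompose g R \<Longrightarrow> degree \<psi> \<le> degree g"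
  shows "irreducible \<psi> \<and> degree \<psi> = n
         \<and> f dvd pcompose \<psi> (monom 1 q - smult \<theta> [:0, 1:])
         \<and> irreducible (pcompose \<psi> (monom 1 q - smult \<theta> [:0, 1:]) div f)
         \<and> degree (pcompose \<psi> (monom 1 q - smult \<theta> [:0, 1:]) div f) = n * (q - 1)"
proof -
  have qc: "card (UNIV::'a set) = q" using q_def by simp
  define Lp :: "'a poly" where "Lp = monom 1 q - smult \<theta> [:0, 1:]"
  have R_def': "R = Lp mod f" using R_def Lp_def by simp
  define \<theta>' where "\<theta>' = to_ac \<theta>"
  have t0: "\<theta> \<noteq> 0" using prim by (simp add: primitive_element_def)
  hence t0': "\<theta>' \<noteq> 0" unfolding \<theta>'_def by simp
  have tq: "\<theta>' ^ q = \<theta>'" unfolding \<theta>'_def using frob_const[of \<theta> 1] qc by simp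
  have evL: "ev Lp x = x ^ q - \<theta>' * x" for x
    unfolding Lp_def \<theta>'_def by simp
  have fadd: "(x + y) ^ q = x ^ q + y ^ q" for x y :: "'a alg_closure"
    using frob_add[of x y 1] qc by simp
  have fdiff: "(x - y) ^ q = x ^ q - y ^ q" for x y :: "'a alg_closure"
    using frob_diff[of x y 1] qc by simp
  have Ladd: "ev Lp (x + y) = ev Lp x + ev Lp y" for x y
    unfolding evL fadd by (simp add: algebra_simps)
  have Ldiff: "ev Lp (x - y) = ev Lp x - ev Lp y" for x y
    unfolding evL fdiff by (simp add: algebra_simps)
  have frobQ: "(x + y) ^ (q ^ t) = x ^ (q ^ t) + y ^ (q ^ t)" for x y :: "'a alg_closure" and t
    using frob_add[of x y t] qc by simp
  have frobQd: "(x - y) ^ (q ^ t) = x ^ (q ^ t) - y ^ (q ^ t)" for x y :: "'a alg_closure" and t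
    using frob_diff[of x y t] qc by simp
  have evfrob: "ev g (x ^ (q ^ t)) = ev g x ^ (q ^ t)" for g :: "'a poly" and x t
    using ev_frob[of g x t] qc by simp
  have q3: "q \<ge> 3" using q_gt by simp
  have f0: "f \<noteq> 0" using f_irr by (simp add: Factorial_Ring.irreducible_def)
  have "degree (map_poly to_ac f) = n" using f_deg by (simp add: degree_map_poly)
  then obtain \<alpha> where fa: "ev f \<alpha> = 0"
    using alg_closed_imp_poly_has_root[of "map_poly to_ac f"] n_ge unfolding ev_def by auto
  define \<beta> where "\<beta> = ev Lp \<alpha>"
  have evR: "ev R \<alpha> = \<beta>" unfolding R_def' \<beta>_def by (rule ev_mod[OF fa])
  have ann_iff: "f dvd pcompose g R \<longleftrightarrow> ev g \<beta> = 0" for g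
    using ev_minpoly[OF f_irr fa, of "pcompose g R"] evR by simp
  have psi_b: "ev \<psi> \<beta> = 0" using ann_iff psi_ann by blast
  have psi_min': "degree \<psi> \<le> degree g" if "g \<noteq> 0" "ev g \<beta> = 0" for g
    using psi_min that ann_iff by blast
  have psi_irr: "irreducible \<psi>" by (rule mindeg_irreducible[OF psi_nz psi_b psi_min'])
  have afix: "\<alpha> ^ (q ^ n) = \<alpha>" using lagrange_root[OF f_irr f_deg fa] qc by simp
  define d where "d = degree \<psi>"
  have d1: "d \<ge> 1" unfolding d_def by (rule irr_deg_pos[OF psi_irr psi_b])
  have bfix: "\<beta> ^ (q ^ d) = \<beta>" using lagrange_root[OF psi_irr d_def[symmetric] psi_b] qc by simp
  have d_le: "d \<le> n"
  proof -
    define V where "V = (\<lambda>g. ev g \<alpha>) ` B n"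
    have finBn: "finite (B n :: 'a poly set)" and cBn: "card (B n :: 'a poly set) = q ^ n"
      using card_B[OF n_ge, where 'a='a] qc by auto
    have cV: "card V \<le> q ^ n" unfolding V_def using card_image_le[OF finBn, of "\<lambda>g. ev g \<alpha>"] cBn by simp
    have finBn1: "finite (B (Suc n) :: 'a poly set)" and cBn1: "card (B (Suc n) :: 'a poly set) = q ^ Suc n"
      using card_B[of "Suc n", where 'a='a] qc by auto
    have "\<not> inj_on (\<lambda>g. ev g \<beta>) (B (Suc n))"
    proof
      assume inj: "inj_on (\<lambda>g. ev g \<beta>) (B (Suc n))"
      have sub: "(\<lambda>g. ev g \<beta>) ` B (Suc n) \<subseteq> V"
      proof
        fix y assume "y \<in> (\<lambda>g. ev g \<beta>) ` B (Suc n)"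
        then obtain g where yg: "y = ev g \<beta>" by auto
        have "y = ev (pcompose g Lp) \<alpha>" using yg \<beta>_def by simp
        thus "y \<in> V" unfolding V_def using ev_B_closed[OF f_deg fa n_ge, of "pcompose g Lp"]
          by (simp del: ev_pcompose)
      qed
      have finV: "finite V" unfolding V_def using finBn by simp
      have "q ^ Suc n = card ((\<lambda>g. ev g \<beta>) ` B (Suc n))" using card_image[OF inj] cBn1 by simp
      also have "\<dots> \<le> card V" by (rule card_mono[OF finV sub])
      finally have "q ^ Suc n \<le> q ^ n" using cV by linarith
      moreover have "q ^ n < q ^ Suc n" using q3 by simp
      ultimately show False by linarith
    qed
    then obtain g1 g2 where g: "g1 \<in> B (Suc n)" "g2 \<in> B (Suc n)" "g1 \<noteq> g2" "ev g1 \<beta> = ev g2 \<beta>"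
      unfolding inj_on_def by blast
    have nz: "g1 - g2 \<noteq> 0" using g by simp
    have ev0: "ev (g1 - g2) \<beta> = 0" using g by simp
    have "degree (g1 - g2) \<le> max (degree g1) (degree g2)" by (rule degree_diff_le_max)
    hence "degree (g1 - g2) \<le> n" using g unfolding B_def by simp
    thus ?thesis using psi_min'[OF nz ev0] unfolding d_def by simp
  qed
  have n_le: "n \<le> d"
  proof -
    define \<delta> where "\<delta> = \<alpha> ^ (q ^ d) - \<alpha>"
    have "ev Lp (\<alpha> ^ (q ^ d)) = \<beta> ^ (q ^ d)" using evfrob[of Lp \<alpha> d] unfolding \<beta>_def .
    hence "ev Lp (\<alpha> ^ (q ^ d)) = \<beta>" using bfix by simp
    hence "ev Lp \<delta> = 0" unfolding \<delta>_def Ldiff \<beta>_def by simp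
    hence dq: "\<delta> ^ q = \<theta>' * \<delta>" using evL[of \<delta>] by simp
    have "\<delta> ^ (q ^ n) = (\<alpha> ^ (q ^ d)) ^ (q ^ n) - \<alpha> ^ (q ^ n)" unfolding \<delta>_def by (rule frobQd)
    also have "(\<alpha> ^ (q ^ d)) ^ (q ^ n) = (\<alpha> ^ (q ^ n)) ^ (q ^ d)"
      by (simp flip: power_mult add: mult.commute)
    finally have dn: "\<delta> ^ (q ^ n) = \<delta>" unfolding \<delta>_def afix .
    have "\<delta> ^ (q ^ n) = \<theta>' ^ n * \<delta>" by (rule pow_eigen[OF dq tq])
    hence "\<delta> = 0 \<or> \<theta>' ^ n = 1" using dn by (metis mult_cancel_right2)
    moreover have "\<theta>' ^ n \<noteq> 1"
    proof
      assume "\<theta>' ^ n = 1"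
      hence "\<theta> ^ n = 1" unfolding \<theta>'_def by (metis to_ac_1 to_ac_eq_iff to_ac_power)
      hence "(q - 1) dvd n" using prim_order[OF prim] qc by simp
      hence "(q - 1) dvd gcd n (q - 1)" by simp
      hence "(q - 1) dvd 1" using coprime by simp
      thus False using q3 by simp
    qed
    ultimately have "\<delta> = 0" by simp
    hence "\<alpha> ^ (card (UNIV::'a set) ^ d) = \<alpha>" unfolding \<delta>_def qc by simp
    thus ?thesis by (rule degree_le_fix[OF f_irr f_deg fa _ d1])
  qed
  have dn: "degree \<psi> = n" using d_le n_le d_def by simp
  have bfixn: "\<beta> ^ (q ^ n) = \<beta>" using bfix dn d_def by simp
  define G where "G = pcompose \<psi> Lp"
  have evG: "ev G x = ev \<psi> (ev Lp x)" for x unfolding G_def by simp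
  have fG: "f dvd G" using ev_minpoly[OF f_irr fa, of G] evG psi_b \<beta>_def by simp
  have dLp: "degree Lp = q"
  proof -
    have d1: "degree (- smult \<theta> [:0,1::'a:]) = 1" using t0 by simp
    have d2: "degree (monom (1::'a) q) = q" by (simp add: degree_monom_eq)
    have "degree (monom (1::'a) q + - smult \<theta> [:0,1:]) = degree (monom (1::'a) q)"
      by (rule degree_add_eq_left) (use d1 d2 q3 in simp)
    thus ?thesis unfolding Lp_def using d2 by (simp only: diff_conv_add_uminus)
  qed
  have dG: "degree G = n * q" unfolding G_def using dn dLp by (simp add: degree_pcompose)
  define F where "F = G div f"
  have GfF: "G = f * F" unfolding F_def using fG by simp
  have "n * q \<noteq> 0" using n_ge q3 by simp
  hence G0: "G \<noteq> 0" using dG by (metis degree_0)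
  have F0: "F \<noteq> 0" using GfF G0 by auto
  have dF: "degree F = n * (q - 1)"
  proof -
    have "degree G = degree f + degree F" using GfF f0 F0 by (simp add: degree_mult_eq)
    thus ?thesis using dG f_deg by (simp add: diff_mult_distrib2)
  qed
  obtain \<gamma> where g1: "\<gamma> ^ (q - 1) = \<theta>'" using nth_root_exists[of "q - 1" \<theta>'] q3 by auto
  obtain r where qr: "q = Suc r" using q3 by (cases q) auto
  have g0: "\<gamma> \<noteq> 0"
  proof
    assume "\<gamma> = 0"
    with g1 have "\<theta>' = 0 ^ r" using qr by simp
    thus False using t0' q3 qr by (cases r) auto
  qed
  have gq: "\<gamma> ^ q = \<theta>' * \<gamma>"
  proof -
    have "\<gamma> ^ q = \<gamma> ^ (q - 1) * \<gamma>" unfolding qr by (simp add: power_Suc2)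
    thus ?thesis using g1 by simp
  qed
  define \<rho> where "\<rho> = \<alpha> + \<gamma>"
  have Lr: "ev Lp \<rho> = \<beta>" unfolding \<rho>_def Ladd \<beta>_def using evL[of \<gamma>] gq by simp
  have Gr: "ev G \<rho> = 0" using evG Lr psi_b by simp
  obtain h where hm: "h \<noteq> 0 \<and> ev h \<rho> = 0"
     and hmin: "\<And>g. g \<noteq> 0 \<and> ev g \<rho> = 0 \<Longrightarrow> degree h \<le> degree g"
    using ex_has_least_nat[of "\<lambda>h. h \<noteq> 0 \<and> ev h \<rho> = 0" G degree] G0 Gr by blast
  have h_irr: "irreducible h" using hm hmin by (intro mindeg_irreducible) auto
  define k where "k = degree h"
  have k1: "k \<ge> 1" unfolding k_def using irr_deg_pos[OF h_irr] hm by blast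
  have rfix: "\<rho> ^ (q ^ k) = \<rho>" using lagrange_root[OF h_irr k_def[symmetric]] hm qc by simp
  have "\<beta> ^ (q ^ k) = ev Lp (\<rho> ^ (q ^ k))" using evfrob[of Lp \<rho> k] Lr by simp
  also have "\<dots> = \<beta>" using rfix Lr by simp
  finally have bk: "\<beta> ^ (q ^ k) = \<beta>" .
  have "\<beta> ^ (q ^ gcd k n) = \<beta>" by (rule pow_fix_gcd[OF bk bfixn])
  hence "n \<le> gcd k n" using degree_le_fix[OF psi_irr dn psi_b] qc n_ge
    by (simp add: Suc_le_eq)
  moreover have "gcd k n \<le> n" using n_ge by (intro gcd_le2_nat) simp
  ultimately have "gcd k n = n" by linarith
  hence "n dvd k" by (metis gcd_dvd1)
  then obtain j where kj: "k = n * j" by (elim dvdE)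
  have ak: "\<alpha> ^ (q ^ k) = \<alpha>" unfolding kj by (rule pow_fix_mult[OF afix])
  have gk: "\<gamma> ^ (q ^ k) = \<theta>' ^ k * \<gamma>" by (rule pow_eigen[OF gq tq])
  have "\<rho> = \<alpha> + \<theta>' ^ k * \<gamma>" using rfix unfolding \<rho>_def frobQ ak gk by simp
  hence "\<theta>' ^ k * \<gamma> = 1 * \<gamma>" unfolding \<rho>_def by simp
  hence "\<theta>' ^ k = 1" using g0 by (metis mult_cancel_right)
  hence "\<theta> ^ k = 1" unfolding \<theta>'_def by (metis to_ac_1 to_ac_eq_iff to_ac_power)
  hence "(q - 1) dvd n * j" using prim_order[OF prim] qc kj by simp
  moreover have "coprime (q - 1) n" using coprime by (simp add: coprime_iff_gcd_eq_1 gcd.commute)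
  ultimately have "(q - 1) dvd j" using coprime_dvd_mult_right_iff by blast
  moreover have "j \<noteq> 0" using kj k1 by auto
  ultimately have "q - 1 \<le> j" by (simp add: dvd_imp_le)
  hence kge: "n * (q - 1) \<le> k" unfolding kj by simp
  have "ev f \<rho> * ev F \<rho> = 0" using Gr GfF by simp
  moreover have "ev f \<rho> \<noteq> 0"
  proof
    assume "ev f \<rho> = 0"
    hence "h dvd f" using ev_minpoly[OF h_irr] hm by blast
    hence "k \<le> n" unfolding k_def using f0 f_deg dvd_imp_degree_le by blast
    moreover have "n * (q - 1) > n" using q3 n_ge by simp
    ultimately show False using kge by simp
  qed
  ultimately have "ev F \<rho> = 0" by simp
  hence "h dvd F" using ev_minpoly[OF h_irr] hm by blast
  then obtain u where Fu: "F = h * u" by (elim dvdE)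
  have u0: "u \<noteq> 0" using Fu F0 by auto
  have "degree F = k + degree u" unfolding Fu k_def using hm u0 by (simp add: degree_mult_eq)
  hence "degree u = 0" using dF kge by simp
  hence "is_unit u" using u0 is_unit_iff_degree by blast
  hence F_irr: "irreducible F" unfolding Fu using h_irr irreducible_mult_unit_left[of u h]
    by (simp add: mult.commute)
  show ?thesis
    using psi_irr dn fG F_irr dF unfolding G_def F_def Lp_def by simp
qed

end
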